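(* Let $\mathbf d=(d_1,\dots,d_m)\in(\mathbb Z_{\ge0})^m$ and let $z=z(\mathbf s)$ be the formal power series in $\mathbf s=(s_1,\dots,s_m)$ determined by $1-z+\sum_{i=1}^m s_iz^{d_i+1}=0$, $z(0)=1$. Define the formal power series $$F(\mathbf s)=\sum_{\mathbf k\in(\mathbb Z_{\ge0})^m}\frac{\binom{2+(\mathbf d+\mathbf 1)\cdot\mathbf k}{\mathbf k}}{(1+(\mathbf d+\mathbf 1)\cdot\mathbf k)(2+(\mathbf d+\mathbf 1)\cdot\mathbf k)}\mathbf s^{\mathbf k},$$ $$G(\mathbf s)=\sum_{\mathbf k\in(\mathbb Z_{\ge0})^m}\frac{6+\sum_{i=1}^m\frac{d_i(d_i+1)}{d_i+2}k_i}{(2+(\mathbf d+\mathbf 1)\cdot\mathbf k)(3+(\mathbf d+\mathbf 1)\cdot\mathbf k)(4+(\mathbf d+\mathbf 1)\cdot\mathbf k)}\binom{4+(\mathbf d+\mathbf 1)\cdot\mathbf k}{\mathbf k}\mathbf s^{\mathbf k}.$$ Then $G=F^2$ as formal power series; more precisely $G(\mathbf s)=F(\mathbf s)^2-\frac14z^2\big(1-z+\sum_{i=1}^ms_iz^{d_i+1}\big)^2$.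
   Context: Notation: $\mathbf 1=(1,\dots,1)$, $\mathbf a\cdot\mathbf b=\sum a_ib_i$, $\mathbf s^{\mathbf k}=\prod s_i^{k_i}$, $\mathbf k!=\prod k_i!$, and the multinomial coefficient $\binom{n}{\mathbf k}=\frac{n!}{k_1!\cdots k_m!\,(n-\mathbf k\cdot\mathbf 1)!}$. *)

theory Defs
  imports Main "HOL.Real"
begin

text \<open>Formal power series in m variables s_1..s_m with real coefficients,
  represented by their coefficient function on multi-indices k, which are
  lists of naturals of length m (entry i is the exponent of s_(i+1)).
  Values on lists of other lengths are irrelevant.\<close>

type_synonym mfps = "nat list \<Rightarrow> real"

definition mfps_mult :: "nat \<Rightarrow> mfps \<Rightarrow> mfps \<Rightarrow> mfps" where
  "mfps_mult m f g k =
     (\<Sum>a\<in>{a. length a = m \<and> (\<forall>i<m. a ! i \<le> k ! i)}. f a * g (map2 (-) k a))"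

definition mone :: "nat \<Rightarrow> mfps" where
  "mone m k = (if k = replicate m 0 then 1 else 0)"

definition mvar :: "nat \<Rightarrow> nat \<Rightarrow> mfps" where
  "mvar m i k = (if k = (replicate m 0)[i := 1] then 1 else 0)"

fun mpow :: "nat \<Rightarrow> mfps \<Rightarrow> nat \<Rightarrow> mfps" where
  "mpow m f 0 = mone m"
| "mpow m f (Suc n) = mfps_mult m f (mpow m f n)"

definition dotp :: "nat list \<Rightarrow> nat list \<Rightarrow> nat" where
  "dotp d k = (\<Sum>i<length d. (d ! i + 1) * k ! i)"

definition multinom :: "nat \<Rightarrow> nat list \<Rightarrow> real" where
  "multinom n k = fact n / ((\<Prod>i<length k. fact (k ! i)) * fact (n - sum_list k))"

definition Fser :: "nat list \<Rightarrow> mfps" where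
  "Fser d k = multinom (2 + dotp d k) k
      / ((1 + real (dotp d k)) * (2 + real (dotp d k)))"

definition Gser :: "nat list \<Rightarrow> mfps" where
  "Gser d k = (6 + (\<Sum>i<length d. real (d ! i * (d ! i + 1)) / real (d ! i + 2) * real (k ! i)))
      / ((2 + real (dotp d k)) * (3 + real (dotp d k)) * (4 + real (dotp d k)))
      * multinom (4 + dotp d k) k"

definition Eser :: "nat list \<Rightarrow> mfps \<Rightarrow> mfps" where
  "Eser d z k = mone (length d) k - z k
      + (\<Sum>i<length d. mfps_mult (length d) (mvar (length d) i) (mpow (length d) z (d ! i + 1)) k)"

end

theory Submission
  imports Defs
begin

definition Box :: "nat \<Rightarrow> nat list \<Rightarrow> nat list set" where
  "Box m k = {a. length a = m \<and> (\<forall>i<m. a ! i \<le> k ! i)}"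

lemma mult_Box: "mfps_mult m f g k = (\<Sum>a\<in>Box m k. f a * g (map2 (-) k a))"
  by (simp add: mfps_mult_def Box_def)

lemma finite_Box: "finite (Box m k)"
proof (rule finite_subset)
  show "Box m k \<subseteq> {xs. set xs \<subseteq> {0..(\<Sum>j<m. k ! j)} \<and> length xs = m}"
  proof
    fix a assume "a \<in> Box m k"
    hence a: "length a = m" "\<forall>i<m. a ! i \<le> k ! i" by (auto simp: Box_def)
    have "set a \<subseteq> {0..(\<Sum>j<m. k ! j)}"
    proof
      fix x assume "x \<in> set a"
      then obtain i where i: "i < m" "x = a ! i" using a by (auto simp: in_set_conv_nth)
      have "k ! i \<le> (\<Sum>j<m. k ! j)" by (rule member_le_sum) (use i in auto)
      thus "x \<in> {0..(\<Sum>j<m. k ! j)}" using a i by force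
    qed
    thus "a \<in> {xs. set xs \<subseteq> {0..(\<Sum>j<m. k ! j)} \<and> length xs = m}" using a by auto
  qed
qed (rule finite_lists_length_eq, simp)

lemma box_inv:
  assumes "a \<in> Box m k" "length k = m"
  shows "map2 (-) k (map2 (-) k a) = a" "map2 (-) k a \<in> Box m k"
proof -
  have a: "length a = m" "\<forall>i<m. a ! i \<le> k ! i" using assms by (auto simp: Box_def)
  show "map2 (-) k (map2 (-) k a) = a"
    using a assms by (intro nth_equalityI) auto
  show "map2 (-) k a \<in> Box m k" using a assms by (auto simp: Box_def)
qed

lemma nth_sub: "i < length k \<Longrightarrow> i < length a \<Longrightarrow> map2 (-) k a ! i = k ! i - a ! i"
  by simp

lemma mult_comm:
  assumes "length k = m"
  shows "mfps_mult m f g k = mfps_mult m g f k"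
  unfolding mult_Box
  by (rule sum.reindex_bij_witness[of _ "\<lambda>a. map2 (-) k a" "\<lambda>a. map2 (-) k a"])
     (auto simp: box_inv[OF _ assms])

lemma mult_unit_right:
  assumes "length k = m"
  shows "mfps_mult m f (mone m) k = f k"
proof -
  have "mfps_mult m f (mone m) k = (\<Sum>a\<in>Box m k. if a = k then f a else 0)"
    unfolding mult_Box
  proof (rule sum.cong)
    fix a assume "a \<in> Box m k"
    hence a: "length a = m" "\<forall>i<m. a ! i \<le> k ! i" by (auto simp: Box_def)
    have "(map2 (-) k a = replicate m 0) = (a = k)"
    proof
      assume h: "map2 (-) k a = replicate m 0"
      show "a = k"
      proof (rule nth_equalityI)
        fix i assume "i < length a"
        hence "map2 (-) k a ! i = 0" using h a by simp
        thus "a ! i = k ! i" using a assms \<open>i < length a\<close> by fastforce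
      qed (use a assms in simp)
    next
      assume "a = k" thus "map2 (-) k a = replicate m 0" using assms
        by (intro nth_equalityI) auto
    qed
    thus "f a * mone m (map2 (-) k a) = (if a = k then f a else 0)"
      by (simp add: mone_def)
  qed simp
  also have "\<dots> = f k" using finite_Box[of m k] assms by (simp add: Box_def)
  finally show ?thesis .
qed

lemma mult_unit_left:
  assumes "length k = m"
  shows "mfps_mult m (mone m) g k = g k"
  using mult_comm[OF assms, of "mone m" g] mult_unit_right[OF assms] by simp

lemma mult_cong1:
  assumes "\<And>a. length a = m \<Longrightarrow> f a = f' a"
  shows "mfps_mult m f g k = mfps_mult m f' g k"
  unfolding mult_Box by (rule sum.cong) (auto simp: Box_def assms)

lemma mult_cong2:
  assumes "\<And>a. length a = m \<Longrightarrow> g a = g' a" "length k = m"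
  shows "mfps_mult m f g k = mfps_mult m f g' k"
  unfolding mult_Box by (rule sum.cong) (auto simp: Box_def assms)

lemma mult_add: "mfps_mult m (\<lambda>a. f a + f' a) g k = mfps_mult m f g k + mfps_mult m f' g k"
  by (simp add: mfps_mult_def algebra_simps sum.distrib)
lemma mult_diff: "mfps_mult m (\<lambda>a. f a - f' a) g k = mfps_mult m f g k - mfps_mult m f' g k"
  by (simp add: mfps_mult_def algebra_simps sum_subtractf)
lemma mult_scale: "mfps_mult m (\<lambda>a. c * f a) g k = c * mfps_mult m f g k"
  by (simp add: mfps_mult_def algebra_simps sum_distrib_left)
lemma mult_scale2: "mfps_mult m f (\<lambda>a. c * g a) k = c * mfps_mult m f g k"
  by (simp add: mfps_mult_def algebra_simps sum_distrib_left)
lemma mult_sum: "mfps_mult m (\<lambda>a. \<Sum>j\<in>J. f j a) g k = (\<Sum>j\<in>J. mfps_mult m (f j) g k)"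
  by (simp add: mfps_mult_def sum_distrib_right sum.swap[of _ J])



definition sh :: "nat \<Rightarrow> mfps \<Rightarrow> mfps" where
  "sh i f k = (if 0 < k ! i then f (k[i := k ! i - 1]) else 0)"

lemma sh_cong:
  assumes "\<And>a. length a = length k \<Longrightarrow> f a = f' a"
  shows "sh i f k = sh i f' k"
  using assms by (simp add: sh_def)

lemma mult_sh:
  assumes k: "length k = m" and i: "i < m"
  shows "mfps_mult m (sh i f) g k = sh i (mfps_mult m f g) k"
proof (cases "0 < k ! i")
  case False
  have "mfps_mult m (sh i f) g k = (\<Sum>a\<in>Box m k. 0)"
    unfolding mult_Box by (rule sum.cong) (use False i in \<open>auto simp: Box_def sh_def\<close>)
  thus ?thesis using False by (simp add: sh_def)
next
  case True
  define k' where "k' = k[i := k ! i - 1]"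
  have "mfps_mult m (sh i f) g k = (\<Sum>a\<in>{a\<in>Box m k. 0 < a ! i}. f (a[i := a ! i - 1]) * g (map2 (-) k a))"
    unfolding mult_Box sh_def
    by (rule sum.mono_neutral_cong_right) (auto simp: finite_Box)
  also have "\<dots> = (\<Sum>b\<in>Box m k'. f b * g (map2 (-) k' b))"
  proof (rule sum.reindex_bij_witness[of _ "\<lambda>b. b[i := b ! i + 1]" "\<lambda>a. a[i := a ! i - 1]"])
    fix a assume "a \<in> {a\<in>Box m k. 0 < a ! i}"
    hence a: "length a = m" "\<forall>j<m. a ! j \<le> k ! j" "0 < a ! i" by (auto simp: Box_def)
    show "(a[i := a ! i - 1])[i := (a[i := a ! i - 1]) ! i + 1] = a"
      using a i by (intro nth_equalityI) (auto simp: nth_list_update)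
    show "a[i := a ! i - 1] \<in> Box m k'"
      using a i k by (auto simp: Box_def k'_def nth_list_update)
    have "map2 (-) k' (a[i := a ! i - 1]) = map2 (-) k a"
      using a i k True by (intro nth_equalityI) (auto simp: k'_def nth_list_update)
    thus "f (a[i := a ! i - 1]) * g (map2 (-) k' (a[i := a ! i - 1])) =
          f (a[i := a ! i - 1]) * g (map2 (-) k a)" by simp
  next
    fix b assume "b \<in> Box m k'"
    hence b: "length b = m" "\<forall>j<m. b ! j \<le> k' ! j" by (auto simp: Box_def)
    show "(b[i := b ! i + 1])[i := (b[i := b ! i + 1]) ! i - 1] = b"
      using b i by (intro nth_equalityI) (auto simp: nth_list_update)
    show "b[i := b ! i + 1] \<in> {a \<in> Box m k. 0 < a ! i}"
      using b i k True by (auto simp: Box_def k'_def nth_list_update split: if_splits)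
  qed
  also have "\<dots> = sh i (mfps_mult m f g) k"
    using True by (simp add: sh_def mult_Box k'_def)
  finally show ?thesis .
qed

lemma dotp_sub:
  assumes "a \<in> Box m k" "length k = m" "length d = m"
  shows "dotp d a + dotp d (map2 (-) k a) = dotp d k"
proof -
  have a: "length a = m" "\<forall>j<m. a ! j \<le> k ! j" using assms by (auto simp: Box_def)
  show ?thesis
    unfolding dotp_def assms(3) sum.distrib[symmetric]
    by (rule sum.cong) (use a assms in \<open>auto simp: diff_mult_distrib2[symmetric] add_mult_distrib2[symmetric]\<close>)
qed

lemma mult_deriv:
  assumes "length k = m" "length d = m"
  shows "real (dotp d k) * mfps_mult m f g k
     = mfps_mult m (\<lambda>a. real (dotp d a) * f a) g k + mfps_mult m f (\<lambda>b. real (dotp d b) * g b) k"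
proof -
  have "real (dotp d k) * mfps_mult m f g k = (\<Sum>a\<in>Box m k. (real (dotp d a) + real (dotp d (map2 (-) k a))) * (f a * g (map2 (-) k a)))"
    unfolding mult_Box sum_distrib_left
    by (rule sum.cong) (auto simp: dotp_sub[OF _ assms] simp flip: of_nat_add)
  thus ?thesis unfolding mult_Box by (simp add: algebra_simps sum.distrib)
qed



definition A :: "nat list \<Rightarrow> nat \<Rightarrow> mfps" where
  "A d r k = (if r = 0 then mone (length d) k
              else real r / real (dotp d k + r) * multinom (dotp d k + r) k)"

lemma A0: "A d 0 = mone (length d)" by (simp add: A_def fun_eq_iff)

lemma sum_list_nth: "sum_list k = (\<Sum>i<length k. k ! i)"
  by (simp add: sum_list_sum_nth atLeast0LessThan)

lemma n_le_D: assumes "length k = length d" shows "sum_list k \<le> dotp d k"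
  unfolding sum_list_nth dotp_def assms by (rule sum_mono) auto

lemma kprod_pos: "(\<Prod>i<length k. fact (k ! i) :: real) > 0"
  by (rule prod_pos) auto

lemma multinom_step:
  assumes "sum_list k \<le> N"
  shows "multinom (Suc N) k * real (Suc N - sum_list k) = real (Suc N) * multinom N k"
proof -
  have e: "Suc N - sum_list k = Suc (N - sum_list k)" using assms by simp
  show ?thesis unfolding multinom_def e using kprod_pos[of k]
    by (simp add: field_simps fact_Suc del: of_nat_Suc)
qed

lemma kprod_upd:
  assumes "i < length k" "0 < k ! i"
  shows "(\<Prod>j<length (k[i := k ! i - 1]). fact (k[i := k ! i - 1] ! j) :: real) * real (k ! i)
       = (\<Prod>j<length k. fact (k ! j))"
proof -
  have fin: "finite {..<length k}" by simp
  have r: "(\<Prod>j\<in>{..<length k} - {i}. fact (k[i := k ! i - 1] ! j) :: real) = (\<Prod>j\<in>{..<length k} - {i}. fact (k ! j))"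
    by (rule prod.cong) auto
  have f: "fact (k ! i) = (fact (k ! i - 1) :: real) * real (k ! i)"
    using assms(2) fact_reduce[of "k ! i"] by (simp add: mult.commute)
  show ?thesis
    using prod.remove[OF fin, of i "\<lambda>j. fact (k[i := k ! i - 1] ! j) :: real"]
          prod.remove[OF fin, of i "\<lambda>j. fact (k ! j) :: real"] assms r f
    by simp
qed

lemma nth_le_sum_list: "i < length k \<Longrightarrow> (k::nat list) ! i \<le> sum_list k"
  by (induction k arbitrary: i) (auto simp: nth_Cons split: nat.splits, meson le_add2 le_trans)

lemma sum_list_upd:
  fixes k :: "nat list"
  assumes "i < length k" "0 < k ! i"
  shows "sum_list (k[i := k ! i - 1]) + 1 = sum_list k"
proof -
  have "k ! i \<le> sum_list k" using assms(1) by (rule nth_le_sum_list)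
  thus ?thesis using sum_list_update[OF assms(1), of "k ! i - 1"] assms by simp
qed

lemma dotp_upd:
  assumes "i < length d" "length k = length d" "0 < k ! i"
  shows "dotp d (k[i := k ! i - 1]) + (d ! i + 1) = dotp d k"
proof -
  have fin: "finite {..<length d}" by simp
  have r: "(\<Sum>j\<in>{..<length d} - {i}. (d ! j + 1) * (k[i := k ! i - 1] ! j)) = (\<Sum>j\<in>{..<length d} - {i}. (d ! j + 1) * k ! j)"
    by (rule sum.cong) auto
  have e: "(d ! i + 1) * (k ! i - 1) + (d ! i + 1) = (d ! i + 1) * k ! i"
    using assms(3) by (cases "k ! i") auto
  show ?thesis unfolding dotp_def
    using sum.remove[OF fin, of i "\<lambda>j. (d ! j + 1) * (k[i := k ! i - 1] ! j)"]
          sum.remove[OF fin, of i "\<lambda>j. (d ! j + 1) * k ! j"] assms r e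
    by (simp add: algebra_simps)
qed

lemma multinom_upd:
  assumes "i < length k" "0 < k ! i" "sum_list k \<le> N"
  shows "multinom N (k[i := k ! i - 1]) * real (Suc N - sum_list k) = real (k ! i) * multinom N k"
proof -
  have s: "sum_list (k[i := k ! i - 1]) + 1 = sum_list k" using sum_list_upd[OF assms(1,2)] .
  have e: "N - sum_list (k[i := k ! i - 1]) = Suc (N - sum_list k)" using s assms(3) by linarith
  have e2: "Suc N - sum_list k = Suc (N - sum_list k)" using assms(3) by simp
  define P' where "P' = (\<Prod>j<length (k[i := k ! i - 1]). fact (k[i := k ! i - 1] ! j) :: real)"
  have P': "P' > 0" unfolding P'_def by (rule kprod_pos)
  have P: "(\<Prod>j<length k. fact (k ! j) :: real) = P' * real (k ! i)"
    using kprod_upd[OF assms(1,2)] by (simp add: P'_def)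
  have ki: "real (k ! i) > 0" using assms by simp
  show ?thesis unfolding multinom_def e e2 P P'_def[symmetric]
    using P' ki by (simp add: field_simps fact_Suc del: of_nat_Suc)
qed

lemma A_shift:
  assumes kd: "length k = length d" and i: "i < length d"
  shows "sh i (A d (c + d ! i + 1)) k
    = real (c + d ! i + 1) * real (k ! i) * multinom (dotp d k + c) k
       / (real (dotp d k + c) * real (Suc (dotp d k + c) - sum_list k))"
proof (cases "0 < k ! i")
  case False thus ?thesis by (simp add: sh_def)
next
  case True
  define k' where "k' = k[i := k ! i - 1]"
  have D: "dotp d k' + (d ! i + 1) = dotp d k" unfolding k'_def by (rule dotp_upd[OF i kd True])
  have nD: "sum_list k \<le> dotp d k" by (rule n_le_D[OF kd])
  have N: "dotp d k' + (c + d ! i + 1) = dotp d k + c" using D by simp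
  have mu: "multinom (dotp d k + c) k' * real (Suc (dotp d k + c) - sum_list k) = real (k ! i) * multinom (dotp d k + c) k"
    unfolding k'_def by (rule multinom_upd) (use True i kd nD in auto)
  have pos1: "real (Suc (dotp d k + c) - sum_list k) > 0" using nD by simp
  have pos2: "real (dotp d k + c) > 0" using D by simp
  have eq: "A d (c + d ! i + 1) k' = real (c + d ! i + 1) / real (dotp d k' + (c + d ! i + 1)) * multinom (dotp d k' + (c + d ! i + 1)) k'"
    by (simp add: A_def)
  have shE: "sh i (A d (c + d ! i + 1)) k = real (c + d ! i + 1) / real (dotp d k + c) * multinom (dotp d k + c) k'"
    using True unfolding sh_def k'_def[symmetric] eq N by simp
  have X: "multinom (dotp d k + c) k' = real (k!i) * multinom (dotp d k + c) k / real (Suc (dotp d k + c) - sum_list k)"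
    using mu pos1 by (simp add: eq_divide_eq)
  have gen: "\<And>a b c e f::real. a/b*(c*e/f) = a*c*e/(b*f)" by simp
  show ?thesis unfolding shE X gen ..
qed



lemma sum_weights:
  assumes "length k = length d"
  shows "(\<Sum>i<length d. (c + d ! i + 1) * k ! i) = c * sum_list k + dotp d k"
  unfolding sum_list_nth dotp_def assms sum_distrib_left sum.distrib[symmetric]
  by (rule sum.cong) (auto simp: algebra_simps)

lemma A_rec:
  assumes kd: "length k = length d" and r: "1 \<le> r"
  shows "A d r k = A d (r - 1) k + (\<Sum>i<length d. sh i (A d (r + d ! i)) k)"
proof (cases "k = replicate (length d) 0")
  case True
  have sh0: "sh i f k = 0" if "i < length d" for i f using True that by (simp add: sh_def)
  have S0: "(\<Sum>i<length d. sh i (A d (r + d ! i)) k) = 0" by (rule sum.neutral) (simp add: sh0)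
  have D0: "dotp d k = 0" using True by (simp add: dotp_def)
  have m1: "multinom N k = 1" for N using True by (simp add: multinom_def sum_list_replicate)
  show ?thesis unfolding S0 A_def D0 m1 using r True by (simp add: mone_def)
next
  case False
  then obtain j where j: "j < length d" "k ! j \<noteq> 0"
    using kd by (metis in_set_conv_nth replicate_eqI)
  have n1: "1 \<le> sum_list k" using nth_le_sum_list[of j k] j kd by simp
  have nD: "sum_list k \<le> dotp d k" by (rule n_le_D[OF kd])
  define c where "c = r - 1"
  have rc: "r = c + 1" using r c_def by simp
  define N where "N = dotp d k + c"
  define Z where "Z = multinom N k"
  define Q where "Q = real (Suc N - sum_list k)"
  have Qe: "Q = real N + 1 - real (sum_list k)" using nD unfolding Q_def N_def by (simp add: of_nat_diff)
  have Qp: "Q > 0" using nD unfolding Q_def N_def by simp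
  have Np: "real N > 0" using nD n1 unfolding N_def by simp
  have shE: "sh i (A d (r + d ! i)) k = real (c + d ! i + 1) * real (k ! i) * Z / (real N * Q)"
    if "i < length d" for i
    using A_shift[OF kd that, of c] unfolding Z_def N_def Q_def rc by (simp add: ac_simps)
  have "(\<Sum>i<length d. sh i (A d (r + d ! i)) k)
        = (\<Sum>i<length d. real ((c + d ! i + 1) * k ! i)) * Z / (real N * Q)"
    unfolding sum_distrib_right sum_divide_distrib by (rule sum.cong) (simp_all add: shE algebra_simps)
  also have "\<dots> = (real c * real (sum_list k) + real (dotp d k)) * Z / (real N * Q)"
    unfolding of_nat_sum[symmetric] sum_weights[OF kd] by simp
  finally have S: "(\<Sum>i<length d. sh i (A d (r + d ! i)) k) = (real c * real (sum_list k) + real (dotp d k)) * Z / (real N * Q)" .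
  have st: "multinom (Suc N) k * Q = real (Suc N) * Z"
    unfolding Q_def Z_def by (rule multinom_step) (use nD N_def in simp)
  have Ar: "A d r k = real r * Z / Q"
  proof -
    have "A d r k = real r / real (Suc N) * multinom (Suc N) k"
      by (simp add: A_def rc N_def)
    also have "multinom (Suc N) k = real (Suc N) * Z / Q" using st Qp by (simp add: eq_divide_eq)
    finally show ?thesis by simp
  qed
  have Ac: "A d (r - 1) k = real c * Z / real N"
    using False kd unfolding rc by (simp add: A_def mone_def N_def Z_def)
  have De: "real (dotp d k) = real N - real c" unfolding N_def by simp
  have key: "(real c + 1) * Z * real N = real c * Z * Q + (real c * real (sum_list k) + (real N - real c)) * Z"
    unfolding Qe by (simp add: algebra_simps)
  have "real r * Z / Q = real c * Z / real N + (real c * real (sum_list k) + (real N - real c)) * Z / (real N * Q)"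
    using Qp Np key unfolding rc apply (simp add: field_simps)
    apply (drule arg_cong[where f="\<lambda>x. Q * x"]) by (simp add: algebra_simps)
  thus ?thesis unfolding Ar Ac S De .
qed

lemma rec_unique:
  fixes B B' :: "nat \<Rightarrow> mfps"
  assumes b0: "\<And>k. length k = length d \<Longrightarrow> B 0 k = B' 0 k"
    and rb: "\<And>r k. 1 \<le> r \<Longrightarrow> length k = length d \<Longrightarrow> B r k = B (r - 1) k + (\<Sum>i<length d. sh i (B (r + d ! i)) k)"
    and rb': "\<And>r k. 1 \<le> r \<Longrightarrow> length k = length d \<Longrightarrow> B' r k = B' (r - 1) k + (\<Sum>i<length d. sh i (B' (r + d ! i)) k)"
  shows "length k = length d \<Longrightarrow> B r k = B' r k"
proof (induction "sum_list k" arbitrary: k r rule: less_induct)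
  case less
  have "B r k = B' r k" for r
  proof (induction r)
    case 0 thus ?case using b0 less.prems by simp
  next
    case (Suc r)
    have "sh i (B (Suc r + d ! i)) k = sh i (B' (Suc r + d ! i)) k" if "i < length d" for i
    proof (cases "0 < k ! i")
      case True
      have "sum_list (k[i := k ! i - 1]) < sum_list k"
        using sum_list_upd[of i k] True that less.prems by simp
      thus ?thesis using less.hyps[of "k[i := k ! i - 1]"] less.prems True by (simp add: sh_def)
    qed (simp add: sh_def)
    hence "(\<Sum>i<length d. sh i (B (Suc r + d ! i)) k) = (\<Sum>i<length d. sh i (B' (Suc r + d ! i)) k)"
      by (intro sum.cong) auto
    thus ?case using rb[of "Suc r" k] rb'[of "Suc r" k] Suc.IH less.prems by simp
  qed
  thus ?case .
qed

lemma A_conv: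
  assumes "length k = length d"
  shows "mfps_mult (length d) (A d r) (A d t) k = A d (r + t) k"
proof -
  show ?thesis
  proof (rule rec_unique[where d = d and B = "\<lambda>r k. mfps_mult (length d) (A d r) (A d t) k" and B' = "\<lambda>r k. A d (r + t) k"])
    fix k :: "nat list" assume "length k = length d"
    thus "mfps_mult (length d) (A d 0) (A d t) k = A d (0 + t) k"
      by (simp add: A0 mult_unit_left)
  next
    fix r :: nat and k :: "nat list" assume r: "1 \<le> r" and k: "length k = length d"
    have "mfps_mult (length d) (A d r) (A d t) k
       = mfps_mult (length d) (\<lambda>a. A d (r - 1) a + (\<Sum>i<length d. sh i (A d (r + d ! i)) a)) (A d t) k"
      by (rule mult_cong1) (use A_rec[OF _ r] in blast)
    also have "\<dots> = mfps_mult (length d) (A d (r - 1)) (A d t) k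
        + (\<Sum>i<length d. sh i (\<lambda>k. mfps_mult (length d) (A d (r + d ! i)) (A d t) k) k)"
      by (simp add: mult_add mult_sum mult_sh k)
    finally show "mfps_mult (length d) (A d r) (A d t) k =
       mfps_mult (length d) (A d (r - 1)) (A d t) k +
       (\<Sum>i<length d. sh i (\<lambda>k. mfps_mult (length d) (A d (r + d ! i)) (A d t) k) k)" .
  next
    fix r :: nat and k :: "nat list" assume r: "1 \<le> r" and k: "length k = length d"
    have "A d (r + t) k = A d (r + t - 1) k + (\<Sum>i<length d. sh i (A d (r + t + d ! i)) k)"
      using A_rec[OF k, of "r + t"] r by simp
    thus "A d (r + t) k = A d (r - 1 + t) k + (\<Sum>i<length d. sh i (A d (r + d ! i + t)) k)"
      using r by (simp add: ac_simps)
  qed (rule assms)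
qed



lemma F_W: "(real (dotp d a) + 1) * Fser d a = 1/2 * A d 2 a"
proof -
  define x where "x = real (dotp d a)"
  define M where "M = multinom (2 + dotp d a) a"
  have x: "x \<ge> 0" unfolding x_def by simp
  have F: "Fser d a = M/((1+x)*(2+x))" unfolding Fser_def M_def x_def by simp
  have A2: "A d 2 a = 2/(x+2)*M" unfolding A_def M_def x_def by (simp add: add.commute)
  have e1: "(x+1)*(M/((1+x)*(2+x))) = M/(x+2)" using x by (simp add: add.commute)
  show ?thesis unfolding F A2 x_def[symmetric] e1 by simp
qed

lemma div_aux1: "(b::real) \<noteq> 0 \<Longrightarrow> (b*X/Q)/(a*b) = X/(a*Q)" by (simp add: mult.commute)
lemma div_aux2: "(b::real) \<noteq> 0 \<Longrightarrow> c/b*(b*X/Q) = c*X/Q" by simp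

lemma div_aux3: "(b::real) \<noteq> 0 \<Longrightarrow> c \<noteq> 0 \<Longrightarrow> b*(E/(b*a*c)*(c*Y/Q)) = E*Y/(a*Q)" by (simp add: mult.commute)
lemma comb3: assumes "(a::real) \<noteq> 0" "Q \<noteq> 0" "u * Q - v * a + w = t"
  shows "t * X / (a * Q) = u * X / a - v * X / Q + w * X / (a * Q)"
proof -
  have e1: "u * X / a = u * X * Q / (a * Q)" using assms by simp
  have e2: "v * X / Q = v * X * a / (a * Q)" using assms by simp
  have "u * X / a - v * X / Q + w * X / (a * Q) = (u * X * Q - v * X * a + w * X) / (a * Q)"
    unfolding e1 e2 by (simp add: diff_divide_distrib add_divide_distrib)
  also have "u * X * Q - v * X * a + w * X = t * X" using assms(3) by (simp add: algebra_simps flip: assms(3))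
  finally show ?thesis by simp
qed

lemma F_decomp:
  assumes kd: "length k = length d"
  shows "Fser d k = A d 1 k - A d 2 k / 2 + (\<Sum>i<length d. sh i (A d (d ! i + 2)) k / real (d ! i + 2))"
proof -
  define D where "D = dotp d k"
  define n where "n = sum_list k"
  have nD: "n \<le> D" unfolding n_def D_def by (rule n_le_D[OF kd])
  define X where "X = multinom (D + 1) k"
  define Q where "Q = real (Suc (D + 1) - n)"
  have Qe: "Q = real D + 2 - real n" using nD unfolding Q_def by (simp add: of_nat_diff)
  have Qp: "Q > 0" using nD unfolding Q_def by simp
  have shE: "sh i (A d (d ! i + 2)) k / real (d ! i + 2) = real (k ! i) * X / ((real D + 1) * Q)"
    if "i < length d" for i
  proof -
    have "sh i (A d (d ! i + 2)) k = real (1 + d ! i + 1) * real (k ! i) * X / (real (D + 1) * Q)"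
      using A_shift[OF kd that, of 1] unfolding X_def Q_def D_def n_def by (simp add: ac_simps)
    thus ?thesis by simp
  qed
  have S: "(\<Sum>i<length d. sh i (A d (d ! i + 2)) k / real (d ! i + 2)) = real n * X / ((real D + 1) * Q)"
  proof -
    have "(\<Sum>i<length d. sh i (A d (d ! i + 2)) k / real (d ! i + 2)) = (\<Sum>i<length d. real (k ! i)) * X / ((real D + 1) * Q)"
      unfolding sum_distrib_right sum_divide_distrib by (intro sum.cong refl shE) simp
    also have "(\<Sum>i<length d. real (k ! i)) = real n"
      unfolding n_def sum_list_nth kd by simp
    finally show ?thesis .
  qed
  have st: "multinom (Suc (D + 1)) k * Q = real (Suc (D + 1)) * X"
    unfolding Q_def X_def n_def by (rule multinom_step) (use nD n_def in simp)
  have A1: "A d 1 k = X / (real D + 1)" by (simp add: A_def D_def X_def)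
  have M2: "multinom (D + 2) k = (real D + 2) * X / Q" using st Qp by (simp add: eq_divide_eq)
  have pD: "real D + 2 \<noteq> 0" by linarith
  have "A d 2 k = 2 / (real D + 2) * multinom (D + 2) k" by (simp add: A_def D_def add.commute)
  also have "\<dots> = 2 * X / Q" unfolding M2 using pD by simp
  finally have A2: "A d 2 k / 2 = X / Q" by simp
  have "Fser d k = multinom (D + 2) k / ((real D + 1) * (real D + 2))"
    by (simp add: Fser_def D_def add.commute)
  hence F: "Fser d k = X / ((real D + 1) * Q)" unfolding M2 using div_aux1[OF pD] by simp
  have key: "Q - (real D + 1) + real n = 1" unfolding Qe by simp
  have "X / ((real D + 1) * Q) = X / (real D + 1) - X / Q + real n * X / ((real D + 1) * Q)"
    using comb3[of "real D + 1" Q 1 1 "real n" 1 X] Qp key by simp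
  thus ?thesis unfolding F A1 A2 S .
qed

lemma c_weight: "real (d + 4) / real (d + 2) * real k
   = real (d * (d + 1)) / real (d + 2) * real k - real (d + 1) * real k + 3 * real k"
  by (simp add: field_simps)

lemma G_closed:
  assumes kd: "length k = length d"
  shows "(real (dotp d k) + 2) * Gser d k = A d 3 k - A d 4 k / 2 + (\<Sum>i<length d. sh i (A d (d ! i + 4)) k / real (d ! i + 2))"
proof -
  define D where "D = dotp d k"
  define n where "n = sum_list k"
  define C where "C = (\<Sum>i<length d. real (d ! i * (d ! i + 1)) / real (d ! i + 2) * real (k ! i))"
  have nD: "n \<le> D" unfolding n_def D_def by (rule n_le_D[OF kd])
  define Y where "Y = multinom (D + 3) k"
  define Q where "Q = real (Suc (D + 3) - n)"
  have Qe: "Q = real D + 4 - real n" using nD unfolding Q_def by (simp add: of_nat_diff)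
  have Qp: "Q > 0" using nD unfolding Q_def by simp
  have shE: "sh i (A d (d ! i + 4)) k / real (d ! i + 2) = real (d ! i + 4) / real (d ! i + 2) * real (k ! i) * Y / ((real D + 3) * Q)"
    if "i < length d" for i
  proof -
    have "sh i (A d (d ! i + 4)) k = real (3 + d ! i + 1) * real (k ! i) * Y / (real (D + 3) * Q)"
      using A_shift[OF kd that, of 3] unfolding Y_def Q_def D_def n_def by (simp add: ac_simps)
    thus ?thesis by (simp add: ac_simps)
  qed
  have wsum: "(\<Sum>i<length d. real (d ! i + 4) / real (d ! i + 2) * real (k ! i)) = C - real D + 3 * real n"
  proof -
    have "(\<Sum>i<length d. real (d ! i + 4) / real (d ! i + 2) * real (k ! i))
      = (\<Sum>i<length d. real (d ! i * (d ! i + 1)) / real (d ! i + 2) * real (k ! i) - real (d ! i + 1) * real (k ! i) + 3 * real (k ! i))"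
      by (rule sum.cong) (simp_all only: c_weight)
    also have "\<dots> = C - real D + 3 * real n"
      unfolding C_def D_def n_def dotp_def sum_list_nth kd sum.distrib sum_subtractf
      by (simp add: sum_distrib_left algebra_simps sum.distrib)
    finally show ?thesis .
  qed
  have S: "(\<Sum>i<length d. sh i (A d (d ! i + 4)) k / real (d ! i + 2)) = (C - real D + 3 * real n) * Y / ((real D + 3) * Q)"
  proof -
    have "(\<Sum>i<length d. sh i (A d (d ! i + 4)) k / real (d ! i + 2)) = (\<Sum>i<length d. real (d ! i + 4) / real (d ! i + 2) * real (k ! i)) * Y / ((real D + 3) * Q)"
      unfolding sum_distrib_right sum_divide_distrib by (intro sum.cong refl shE) simp
    thus ?thesis unfolding wsum .
  qed
  have st: "multinom (Suc (D + 3)) k * Q = real (Suc (D + 3)) * Y"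
    unfolding Q_def Y_def n_def by (rule multinom_step) (use nD n_def in simp)
  have M4: "multinom (D + 4) k = (real D + 4) * Y / Q" using st Qp by (simp add: eq_divide_eq add.commute)
  have A3: "A d 3 k = 3 * Y / (real D + 3)" by (simp add: A_def D_def Y_def)
  have pD4: "real D + 4 \<noteq> 0" by linarith
  have "A d 4 k = 4 / (real D + 4) * multinom (D + 4) k" by (simp add: A_def D_def add.commute)
  hence A4: "A d 4 k / 2 = 2 * Y / Q" unfolding M4 div_aux2[OF pD4] by simp
  have "(real D + 2) * Gser d k = (real D + 2) * ((6 + C) / ((real D + 2) * (real D + 3) * (real D + 4)) * multinom (D + 4) k)"
    unfolding Gser_def C_def[symmetric] D_def[symmetric] by (simp add: add.commute)
  hence G: "(real D + 2) * Gser d k = (6 + C) * Y / ((real D + 3) * Q)"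
    unfolding M4 using div_aux3[of "real D + 2" "real D + 4" "6 + C" "real D + 3" Y Q] by simp
  have key: "3 * Q - 2 * (real D + 3) + (C - real D + 3 * real n) = 6 + C" unfolding Qe by simp
  have "(6 + C) * Y / ((real D + 3) * Q) = 3 * Y / (real D + 3) - 2 * Y / Q + (C - real D + 3 * real n) * Y / ((real D + 3) * Q)"
    using comb3[of "real D + 3" Q 3 2 "C - real D + 3 * real n" "6 + C" Y] Qp key by simp
  thus ?thesis unfolding D_def[symmetric] G A3 A4 S .
qed



lemma mult_deriv2:
  assumes "length k = m" "length d = m"
  shows "(real (dotp d k) + 2) * mfps_mult m f g k
     = mfps_mult m (\<lambda>a. (real (dotp d a) + 1) * f a) g k + mfps_mult m f (\<lambda>b. (real (dotp d b) + 1) * g b) k"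
proof -
  have "(real (dotp d k) + 2) * mfps_mult m f g k = (\<Sum>a\<in>Box m k. ((real (dotp d a) + 1) + (real (dotp d (map2 (-) k a)) + 1)) * (f a * g (map2 (-) k a)))"
    unfolding mult_Box sum_distrib_left
    by (rule sum.cong) (auto simp: dotp_sub[OF _ assms] simp flip: of_nat_add)
  thus ?thesis unfolding mult_Box by (simp add: algebra_simps sum.distrib sum_distrib_left)
qed

lemma mult_div: "mfps_mult m (\<lambda>a. f a / c) g k = mfps_mult m f g k / c"
  by (simp add: mfps_mult_def sum_divide_distrib)

lemma main_eq:
  assumes kd: "length k = length d"
  shows "Gser d k = mpow (length d) (Fser d) 2 k"
proof -
  let ?m = "length d"
  let ?F = "Fser d"
  have P: "mpow ?m ?F 2 k = mfps_mult ?m ?F ?F k"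
    by (simp add: numeral_2_eq_2 mult_cong2[OF mult_unit_right kd])
  have "(real (dotp d k) + 2) * mfps_mult ?m ?F ?F k
      = mfps_mult ?m (\<lambda>a. 1/2 * A d 2 a) ?F k + mfps_mult ?m ?F (\<lambda>b. 1/2 * A d 2 b) k"
    unfolding mult_deriv2[OF kd refl] F_W ..
  also have "\<dots> = mfps_mult ?m ?F (A d 2) k"
    unfolding mult_scale mult_scale2 mult_comm[OF kd, of "A d 2"] by simp
  also have "\<dots> = mfps_mult ?m (\<lambda>a. A d 1 a - A d 2 a / 2 + (\<Sum>i<?m. sh i (A d (d ! i + 2)) a / real (d ! i + 2))) (A d 2) k"
    by (rule mult_cong1) (rule F_decomp)
  also have "\<dots> = mfps_mult ?m (A d 1) (A d 2) k - mfps_mult ?m (A d 2) (A d 2) k / 2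
      + (\<Sum>i<?m. sh i (mfps_mult ?m (A d (d ! i + 2)) (A d 2)) k / real (d ! i + 2))"
    unfolding mult_add mult_diff mult_div mult_sum
    by (simp add: mult_div mult_sh kd)
  also have "\<dots> = A d 3 k - A d 4 k / 2 + (\<Sum>i<?m. sh i (A d (d ! i + 4)) k / real (d ! i + 2))"
  proof -
    have c1: "mfps_mult ?m (A d 1) (A d 2) k = A d 3 k" using A_conv[of k d 1 2] kd by (simp add: numeral_3_eq_3)
    have c2: "mfps_mult ?m (A d 2) (A d 2) k = A d 4 k" using A_conv[of k d 2 2] kd by simp
    have c3: "sh i (mfps_mult ?m (A d (d ! i + 2)) (A d 2)) k = sh i (A d (d ! i + 4)) k" for i
    proof (rule sh_cong)
      fix a :: "nat list" assume "length a = length k"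
      moreover have e: "d ! i + 2 + 2 = d ! i + (4::nat)" by simp
      ultimately show "mfps_mult ?m (A d (d ! i + 2)) (A d 2) a = A d (d ! i + 4) a"
        using A_conv[of a d "d ! i + 2" 2] kd unfolding e by simp
    qed
    show ?thesis by (simp only: c1 c2 c3)
  qed
  also have "\<dots> = (real (dotp d k) + 2) * Gser d k" by (rule G_closed[OF kd, symmetric])
  finally have "(real (dotp d k) + 2) * mfps_mult ?m ?F ?F k = (real (dotp d k) + 2) * Gser d k" .
  hence "mfps_mult ?m ?F ?F k = Gser d k" by (simp add: add_nonneg_eq_0_iff)
  thus ?thesis using P by simp
qed

theorem theoremA2:
  fixes d :: "nat list" and z :: mfps
  assumes z0: "z (replicate (length d) 0) = 1"
    and zeq: "\<forall>k. length k = length d \<longrightarrow> Eser d z k = 0"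
  shows "(\<forall>k. length k = length d \<longrightarrow>
            Gser d k = mpow (length d) (Fser d) 2 k)
       \<and> (\<forall>k. length k = length d \<longrightarrow>
            Gser d k = mpow (length d) (Fser d) 2 k
               - 1/4 * mfps_mult (length d) (mpow (length d) z 2) (mpow (length d) (Eser d z) 2) k)"
proof -
  have E2: "mpow (length d) (Eser d z) 2 b = 0" for b
    using zeq by (simp add: numeral_2_eq_2 mfps_mult_def)
  have M0: "mfps_mult (length d) (mpow (length d) z 2) (mpow (length d) (Eser d z) 2) k = 0" for k
    by (simp add: mfps_mult_def E2)
  show ?thesis using main_eq M0 by simp
qed


end
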